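(* For each $1\le n<\omega$, the relation $F_n$ is a $\mathbf{\Pi}^0_{2+n}$ subset of $X_n\times X_n$.
   Context: Let $\mathbb N=\{0,1,2,\dots\}$ and identify $2^{\mathbb N}$ with $\mathcal P(\mathbb N)$. For $1\le m<\omega$ and $x\in((2^{\mathbb N})^{\mathbb N})^m$ define recursively: $A^x_1=\{x(0)(k):k\in\mathbb N\}\subseteq 2^{\mathbb N}$; for $1\le j<m$ and $l\in\mathbb N$, $a^{x,l}_1=\{x(0)(k):x(1)(l)(k)=1\}$ and $a^{x,l}_{j}=\{a^{x,k}_{j-1}:x(j)(l)(k)=1\}$ for $j\ge 2$; and $A^x_{j+1}=\{a^{x,k}_j:k\in\mathbb N\}$ for $1\le j<m$. Let $X_1=(2^{\mathbb N})^{\mathbb N}$, and for $2\le n<\omega$ let $X_n$ be the set of $x\in((2^{\mathbb N})^{\mathbb N})^n$ such that for every $1\le i<n$: (1) for every $m$ there is $k$ with $x(i)(k)(m)=1$; (2) for every $k$ there is $m$ with $x(i)(k)(m)=1$; (3) for all $k,l_1,l_2$, if $x(i-1)(l_1)=x(i-1)(l_2)$ then $x(i)(k)(l_1)=x(i)(k)(l_2)$. $X_n$ has the subspace topology of the product topology. $F_n$ on $X_n$ is $x\mathrel{F_n}y\iff A^x_n=A^y_n$. *)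

theory Defs
  imports "HOL-Analysis.Analysis" "HOL-Library.Countable_Set_Type"
begin

text \<open>Points of ((2^N)^N)^n are encoded as functions x :: nat => nat => nat => bool,
  x i k m = x(i)(k)(m), extensional (= undefined) outside i < n.\<close>

type_synonym pt = "nat \<Rightarrow> nat \<Rightarrow> nat \<Rightarrow> bool"

definition cantor_top :: "(nat \<Rightarrow> bool) topology" where
  "cantor_top = product_topology (\<lambda>m. discrete_topology (UNIV :: bool set)) UNIV"

definition seq_top :: "(nat \<Rightarrow> nat \<Rightarrow> bool) topology" where
  "seq_top = product_topology (\<lambda>k. cantor_top) UNIV"

definition power_top :: "nat \<Rightarrow> pt topology" where
  "power_top n = product_topology (\<lambda>i. seq_top) {..<n}"

definition Xset :: "nat \<Rightarrow> pt set" where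
  "Xset n = {x \<in> topspace (power_top n).
     \<forall>i. 1 \<le> i \<and> i < n \<longrightarrow>
        (\<forall>m. \<exists>k. x i k m) \<and>
        (\<forall>k. \<exists>m. x i k m) \<and>
        (\<forall>k l1 l2. x (i - 1) l1 = x (i - 1) l2 \<longrightarrow> x i k l1 = x i k l2)}"

definition Xtop :: "nat \<Rightarrow> pt topology" where
  "Xtop n = subtopology (power_top n) (Xset n)"

text \<open>Uniform type for the hereditary objects A^x_j, a^{x,l}_j: an element of 2^N
  (Leaf) or a countable set of such objects (Node). All sets occurring are countable.\<close>
datatype hobj = Leaf "nat \<Rightarrow> bool" | Node "hobj cset"

fun small_a :: "pt \<Rightarrow> nat \<Rightarrow> nat \<Rightarrow> hobj" where
  "small_a x 0 l = undefined"
| "small_a x (Suc 0) l = Node (acset ((\<lambda>k. Leaf (x 0 k)) ` {k. x 1 l k}))"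
| "small_a x (Suc (Suc j)) l = Node (acset ((\<lambda>k. small_a x (Suc j) k) ` {k. x (Suc (Suc j)) l k}))"

fun big_A :: "pt \<Rightarrow> nat \<Rightarrow> hobj set" where
  "big_A x 0 = undefined"
| "big_A x (Suc 0) = range (\<lambda>k. Leaf (x 0 k))"
| "big_A x (Suc (Suc j)) = range (small_a x (Suc j))"

definition F_rel :: "nat \<Rightarrow> (pt \<times> pt) set" where
  "F_rel n = {(x, y). x \<in> Xset n \<and> y \<in> Xset n \<and> big_A x n = big_A y n}"

text \<open>Level 0 is empty (unused).\<close>
fun borel_Sigma :: "'a topology \<Rightarrow> nat \<Rightarrow> 'a set set" where
  "borel_Sigma T 0 = {}"
| "borel_Sigma T (Suc 0) = {S. openin T S}"
| "borel_Sigma T (Suc (Suc k)) =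
     {\<Union>(range A) | A :: nat \<Rightarrow> 'a set. \<forall>j. A j \<in> {topspace T - S | S. S \<in> borel_Sigma T (Suc k)}}"

definition borel_Pi :: "'a topology \<Rightarrow> nat \<Rightarrow> 'a set set" where
  "borel_Pi T k = {topspace T - S | S. S \<in> borel_Sigma T k}"

end

theory Submission
  imports Defs
begin


lemma Sigma_sub: "S \<in> borel_Sigma T q \<Longrightarrow> S \<subseteq> topspace T"
proof (induction q rule: borel_Sigma.induct)
  case (2 T) then show ?case by (simp add: openin_subset)
next
  case (3 T k) then show ?case by auto
qed simp

lemma Pi_sub: "S \<in> borel_Pi T q \<Longrightarrow> S \<subseteq> topspace T"
  unfolding borel_Pi_def by auto

lemma Pi_compl: "A \<in> borel_Pi T q \<Longrightarrow> topspace T - A \<in> borel_Sigma T q"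
proof -
  assume "A \<in> borel_Pi T q"
  then obtain S where S: "A = topspace T - S" "S \<in> borel_Sigma T q" unfolding borel_Pi_def by auto
  have "topspace T - (topspace T - S) = S" using Sigma_sub[OF S(2)] by blast
  then show ?thesis using S by simp
qed

lemma clopen_SP:
  assumes "openin T C" "closedin T C" "1 \<le> q"
  shows "C \<in> borel_Sigma T q \<and> C \<in> borel_Pi T q"
  using assms(3)
proof (induction q rule: nat_induct_at_least)
  case base
  have "C = topspace T - (topspace T - C)" using closedin_subset[OF assms(2)] by auto
  moreover have "openin T (topspace T - C)" using assms(2) by (simp add: closedin_def)
  ultimately show ?case using assms(1) unfolding borel_Pi_def by auto
next
  case (Suc q)
  then obtain k where k: "q = Suc k" by (cases q) auto
  have "C \<in> {topspace T - S | S. S \<in> borel_Sigma T (Suc k)}"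
    using Suc.IH k unfolding borel_Pi_def by auto
  then have s: "C \<in> borel_Sigma T (Suc q)" using k
    by (auto intro!: exI[of _ "\<lambda>_. C"])
  have "topspace T - C \<in> borel_Sigma T (Suc q)" using k Suc.IH closedin_subset[OF assms(2)]
    unfolding borel_Pi_def by (auto intro!: exI[of _ "\<lambda>_. topspace T - C"] exI[of _ C])
  then have "topspace T - (topspace T - C) \<in> borel_Pi T (Suc q)" unfolding borel_Pi_def by auto
  then show ?case using s closedin_subset[OF assms(2)] by (simp add: double_diff)
qed

lemma Sigma_Un_clopen:
  assumes "A \<in> borel_Sigma T q" "openin T C" "closedin T C" "1 \<le> q"
  shows "A \<union> C \<in> borel_Sigma T q"
proof (cases q)
  case 0 then show ?thesis using assms by simp
next
  case (Suc k)
  show ?thesis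
  proof (cases k)
    case 0 then show ?thesis using assms Suc by auto
  next
    case (Suc k')
    obtain B :: "nat \<Rightarrow> _" where B: "A = \<Union>(range B)" "\<forall>j. B j \<in> {topspace T - S | S. S \<in> borel_Sigma T (Suc k')}"
      using assms(1) unfolding \<open>q = Suc k\<close> Suc borel_Sigma.simps mem_Collect_eq by metis
    have "C \<in> borel_Pi T (Suc k')" using clopen_SP[OF assms(2,3)] by simp
    then have C: "C \<in> {topspace T - S | S. S \<in> borel_Sigma T (Suc k')}" by (simp add: borel_Pi_def)
    define B' where "B' = (\<lambda>j. case j of 0 \<Rightarrow> C | Suc j \<Rightarrow> B j)"
    have "A \<union> C = \<Union>(range B')"
      unfolding B'_def B(1) by (auto split: nat.splits)
    moreover have "\<forall>j. B' j \<in> {topspace T - S | S. S \<in> borel_Sigma T (Suc k')}"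
      using B(2) C unfolding B'_def by (auto split: nat.splits)
    ultimately show ?thesis using \<open>q = Suc k\<close> Suc by auto
  qed
qed

lemma SigmaI:
  fixes B :: "nat \<Rightarrow> 'a set"
  assumes "\<And>j. B j \<in> borel_Pi T (Suc k)"
  shows "\<Union>(range B) \<in> borel_Sigma T (Suc (Suc k))"
  using assms unfolding borel_Pi_def borel_Sigma.simps(3) by blast

lemma Inter_Sigma:
  fixes A :: "nat \<Rightarrow> 'a set"
  assumes "\<And>i. A i \<in> borel_Sigma T q" "1 \<le> q"
  shows "\<Inter>(range A) \<in> borel_Pi T (Suc q)"
proof -
  obtain k where k: "q = Suc k" using assms(2) by (cases q) auto
  have "\<Union>(range (\<lambda>i. topspace T - A i)) \<in> borel_Sigma T (Suc q)"
    unfolding k by (rule SigmaI) (use assms(1) k in \<open>unfold borel_Pi_def, blast\<close>)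
  moreover have "\<Inter>(range A) = topspace T - \<Union>(range (\<lambda>i. topspace T - A i))"
    using Sigma_sub[OF assms(1)] by auto
  ultimately show ?thesis unfolding borel_Pi_def by blast
qed

lemma Union_Pi:
  fixes A :: "nat \<Rightarrow> 'a set"
  assumes "\<And>i. A i \<in> borel_Pi T q" "1 \<le> q"
  shows "\<Union>(range A) \<in> borel_Sigma T (Suc q)"
proof -
  obtain k where k: "q = Suc k" using assms(2) by (cases q) auto
  show ?thesis unfolding k by (rule SigmaI) (use assms(1) k in auto)
qed

lemma Pi_decomp:
  assumes "A \<in> borel_Pi T (Suc q)" "1 \<le> q"
  obtains B :: "nat \<Rightarrow> 'a set" where "\<And>i. B i \<in> borel_Sigma T q" "A = \<Inter>(range B)"
proof -
  obtain k where k: "q = Suc k" using assms(2) by (cases q) auto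
  obtain S where S: "A = topspace T - S" "S \<in> borel_Sigma T (Suc q)"
    using assms(1) unfolding borel_Pi_def by auto
  obtain B :: "nat \<Rightarrow> 'a set" where B: "S = \<Union>(range B)" "\<forall>j. B j \<in> {topspace T - S | S. S \<in> borel_Sigma T (Suc k)}"
    using S(2) k by auto
  have "\<forall>j. \<exists>S. B j = topspace T - S \<and> S \<in> borel_Sigma T (Suc k)" using B(2) by blast
  then obtain C where C: "\<And>j. B j = topspace T - C j" "\<And>j. C j \<in> borel_Sigma T (Suc k)"
    by metis
  have "\<Inter>(range C) \<subseteq> topspace T" using Sigma_sub[OF C(2)[of 0]] by auto
  then have "A = \<Inter>(range C)" using S B C by auto
  then show ?thesis using that C k by auto
qed

lemma Pi_Int:
  assumes "A \<in> borel_Pi T (Suc q)" "B \<in> borel_Pi T (Suc q)" "1 \<le> q"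
  shows "A \<inter> B \<in> borel_Pi T (Suc q)"
proof -
  obtain A' :: "nat \<Rightarrow> 'a set" where A': "\<And>i. A' i \<in> borel_Sigma T q" "A = \<Inter>(range A')"
    by (rule Pi_decomp[OF assms(1,3)]) auto
  obtain B' :: "nat \<Rightarrow> 'a set" where B': "\<And>i. B' i \<in> borel_Sigma T q" "B = \<Inter>(range B')"
    by (rule Pi_decomp[OF assms(2,3)]) auto
  define C where "C = (\<lambda>i::nat. if even i then A' (i div 2) else B' (i div 2))"
  have "A \<inter> B = \<Inter>(range C)"
  proof
    show "A \<inter> B \<subseteq> \<Inter>(range C)" using A' B' by (auto simp: C_def)
    show "\<Inter>(range C) \<subseteq> A \<inter> B"
    proof
      fix z assume z: "z \<in> \<Inter>(range C)"
      have "z \<in> A' i" for i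
      proof -
        have "z \<in> C (2*i)" using z by blast
        then show ?thesis by (simp add: C_def)
      qed
      moreover have "z \<in> B' i" for i
      proof -
        have "z \<in> C (2*i+1)" using z by blast
        then show ?thesis by (simp add: C_def)
      qed
      ultimately show "z \<in> A \<inter> B" using A' B' by auto
    qed
  qed
  moreover have "C i \<in> borel_Sigma T q" for i using A' B' by (simp add: C_def)
  ultimately show ?thesis using Inter_Sigma assms(3) by metis
qed



definition aa :: "pt \<Rightarrow> nat \<Rightarrow> nat \<Rightarrow> hobj" where
  "aa x j m = (if j = 0 then Leaf (x 0 m) else small_a x j m)"

lemma aa_0: "aa x 0 m = Leaf (x 0 m)" by (simp add: aa_def)

lemma aa_Suc: "aa x (Suc j) l = Node (acset (aa x j ` {k. x (Suc j) l k}))"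
  by (cases j) (simp_all add: aa_def)

lemma bigA: "big_A x (Suc j) = range (aa x j)"
  by (cases j) (auto simp: aa_def)

lemma aa_Suc_eq: "aa x (Suc j) l = aa y (Suc j) l' \<longleftrightarrow>
   aa x j ` {k. x (Suc j) l k} = aa y j ` {k. y (Suc j) l' k}"
proof -
  have c: "f ` A \<in> {A. countable A}" for f :: "nat \<Rightarrow> hobj" and A by simp
  show ?thesis unfolding aa_Suc by (simp add: acset_inject[OF c c])
qed

lemma Xset_D:
  assumes "x \<in> Xset n" "Suc j < n"
  shows "\<And>m. \<exists>k. x (Suc j) k m" "\<And>k l1 l2. x j l1 = x j l2 \<Longrightarrow> x (Suc j) k l1 = x (Suc j) k l2"
proof -
  have "\<forall>i. 1 \<le> i \<and> i < n \<longrightarrow>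
        (\<forall>m. \<exists>k. x i k m) \<and>
        (\<forall>k. \<exists>m. x i k m) \<and>
        (\<forall>k l1 l2. x (i - 1) l1 = x (i - 1) l2 \<longrightarrow> x i k l1 = x i k l2)"
    using assms(1) unfolding Xset_def by blast
  then have h: "(\<forall>m. \<exists>k. x (Suc j) k m) \<and>
        (\<forall>k l1 l2. x j l1 = x j l2 \<longrightarrow> x (Suc j) k l1 = x (Suc j) k l2)"
    using assms(2) by (metis diff_Suc_1 le_add1 plus_1_eq_Suc)
  show "\<And>m. \<exists>k. x (Suc j) k m" using h by blast
  show "\<And>k l1 l2. x j l1 = x j l2 \<Longrightarrow> x (Suc j) k l1 = x (Suc j) k l2" using h by blast
qed

lemma K1:
  assumes "x \<in> Xset n" "j < n"
  shows "aa x j l1 = aa x j l2 \<longleftrightarrow> x j l1 = x j l2"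
  using assms(2)
proof (induction j arbitrary: l1 l2)
  case 0 then show ?case by (simp add: aa_0)
next
  case (Suc j)
  have IH: "aa x j m1 = aa x j m2 \<longleftrightarrow> x j m1 = x j m2" for m1 m2 using Suc by simp
  have one: "x (Suc j) b m" if eq: "aa x j ` {k. x (Suc j) a k} = aa x j ` {k. x (Suc j) b k}"
     and h: "x (Suc j) a m" for a b m
  proof -
    have "aa x j m \<in> aa x j ` {k. x (Suc j) b k}" using h eq by blast
    then obtain m' where m': "x (Suc j) b m'" "aa x j m' = aa x j m" by auto
    then have "x j m' = x j m" using IH by simp
    then show ?thesis using Xset_D(2)[OF assms(1) Suc.prems] m' by metis
  qed
  show ?case
  proof
    assume "aa x (Suc j) l1 = aa x (Suc j) l2"
    then have eq: "aa x j ` {k. x (Suc j) l1 k} = aa x j ` {k. x (Suc j) l2 k}" by (simp add: aa_Suc_eq)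
    show "x (Suc j) l1 = x (Suc j) l2"
      using one[OF eq] one[OF eq[symmetric]] by blast
  qed (simp add: aa_Suc)
qed

lemma K2:
  assumes "x \<in> Xset n" "Suc j < n"
  shows "aa x j m \<in> aa x j ` {k. x (Suc j) l k} \<longleftrightarrow> x (Suc j) l m"
proof
  assume "aa x j m \<in> aa x j ` {k. x (Suc j) l k}"
  then obtain m' where m': "x (Suc j) l m'" "aa x j m' = aa x j m" by auto
  then have "x j m' = x j m" using K1[OF assms(1)] assms(2) by simp
  then show "x (Suc j) l m" using Xset_D(2)[OF assms] m' by metis
qed auto

lemma K3:
  assumes "x \<in> Xset n" "y \<in> Xset n" "Suc j < n"
    "range (aa x (Suc j)) = range (aa y (Suc j))"
  shows "range (aa x j) \<subseteq> range (aa y j)"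
proof
  fix w assume "w \<in> range (aa x j)"
  then obtain m where m: "w = aa x j m" by auto
  obtain k where k: "x (Suc j) k m" using Xset_D(1)[OF assms(1,3)] by blast
  have "aa x (Suc j) k \<in> range (aa y (Suc j))" using assms(4) by blast
  then obtain k' where "aa x (Suc j) k = aa y (Suc j) k'" by auto
  then have "aa x j ` {k0. x (Suc j) k k0} = aa y j ` {k0. y (Suc j) k' k0}" by (simp add: aa_Suc_eq)
  moreover have "w \<in> aa x j ` {k0. x (Suc j) k k0}" using m k by auto
  ultimately show "w \<in> range (aa y j)" by auto
qed

lemma K3':
  assumes "x \<in> Xset n" "y \<in> Xset n" "Suc j < n"
    "range (aa x (Suc j)) = range (aa y (Suc j))"
  shows "range (aa x j) = range (aa y j)"
  using K3[OF assms] K3[OF assms(2,1,3) assms(4)[symmetric]] by blast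

lemma K3d:
  assumes "x \<in> Xset n" "y \<in> Xset n" "j + d < n"
    "range (aa x (j + d)) = range (aa y (j + d))"
  shows "range (aa x j) = range (aa y j)"
  using assms(3,4)
proof (induction d)
  case (Suc d)
  then show ?case using K3'[OF assms(1,2), of "j + d"] by simp
qed simp



abbreviation TT :: "nat \<Rightarrow> (pt \<times> pt) topology" where
  "TT n \<equiv> prod_topology (Xtop n) (Xtop n)"

lemma ts_TT: "topspace (TT n) = Xset n \<times> Xset n"
  unfolding Xtop_def Xset_def by auto

lemma ts_X: "topspace (Xtop n) = Xset n"
  unfolding Xtop_def Xset_def by auto

lemma coord_cont:
  assumes "i < n"
  shows "continuous_map (Xtop n) (discrete_topology UNIV) (\<lambda>x. x i k m)"
proof -
  have c1: "continuous_map (power_top n) seq_top (\<lambda>x. x i)"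
    unfolding power_top_def using assms by (intro continuous_map_product_projection) auto
  have c2: "continuous_map seq_top cantor_top (\<lambda>s. s k)"
    unfolding seq_top_def by (intro continuous_map_product_projection) auto
  have c3: "continuous_map cantor_top (discrete_topology UNIV) (\<lambda>c. c m)"
    unfolding cantor_top_def by (intro continuous_map_product_projection) auto
  have "continuous_map (power_top n) (discrete_topology UNIV) (\<lambda>x. x i k m)"
    using continuous_map_compose[OF continuous_map_compose[OF c1 c2] c3] by (simp add: o_def)
  then show ?thesis unfolding Xtop_def by (rule continuous_map_from_subtopology)
qed

lemma clopen_eq:
  assumes f: "continuous_map X (discrete_topology UNIV) f"
    and g: "continuous_map X (discrete_topology UNIV) g"
  shows "openin X {z\<in>topspace X. f z = (g z::bool)} \<and> closedin X {z\<in>topspace X. f z = g z}"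
proof -
  have e: "{z\<in>topspace X. f z = g z} = ({z\<in>topspace X. f z \<in> {True}} \<inter> {z\<in>topspace X. g z \<in> {True}})
     \<union> ({z\<in>topspace X. f z \<in> {False}} \<inter> {z\<in>topspace X. g z \<in> {False}})" by auto
  show ?thesis unfolding e
    by (intro conjI openin_Un openin_Int closedin_Un closedin_Int
        openin_continuous_map_preimage[OF f] openin_continuous_map_preimage[OF g]
        closedin_continuous_map_preimage[OF f] closedin_continuous_map_preimage[OF g]) auto
qed

definition Dset :: "nat \<Rightarrow> nat \<Rightarrow> nat \<Rightarrow> nat \<Rightarrow> nat \<Rightarrow> nat \<Rightarrow> (pt \<times> pt) set" where
  "Dset n i k m l m' = {z \<in> Xset n \<times> Xset n. fst z i k m = snd z i l m'}"

lemma Dset_clopen: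
  assumes "i < n"
  shows "openin (TT n) (Dset n i k m l m') \<and> closedin (TT n) (Dset n i k m l m')"
proof -
  have f: "continuous_map (TT n) (discrete_topology UNIV) (\<lambda>z. fst z i k m)"
    using continuous_map_compose[OF continuous_map_fst coord_cont[OF assms]] by (simp add: o_def)
  have g: "continuous_map (TT n) (discrete_topology UNIV) (\<lambda>z. snd z i l m')"
    using continuous_map_compose[OF continuous_map_snd coord_cont[OF assms]] by (simp add: o_def)
  show ?thesis using clopen_eq[OF f g] unfolding Dset_def ts_TT by simp
qed

lemma all_prod_decode: "(\<forall>i. P (prod_decode i)) \<longleftrightarrow> (\<forall>p. P p)"
proof
  assume h: "\<forall>i. P (prod_decode i)"
  show "\<forall>p. P p"
  proof
    fix p show "P p" using h[rule_format, of "prod_encode p"] by simp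
  qed
qed blast

fun Sset :: "nat \<Rightarrow> nat \<Rightarrow> nat \<Rightarrow> nat \<Rightarrow> (pt \<times> pt) set" where
  "Sset n 0 k l = \<Inter>(range (\<lambda>p. Dset n 0 k p l p))"
| "Sset n (Suc j) k l = \<Inter>(range (\<lambda>i. case prod_decode i of (m, m') \<Rightarrow>
      (Xset n \<times> Xset n - Sset n j m m') \<union> Dset n (Suc j) k m l m'))"

declare Sset.simps[simp del]

lemma Sset_mem:
  "z \<in> Sset n 0 k l \<longleftrightarrow> z \<in> Xset n \<times> Xset n \<and> fst z 0 k = snd z 0 l"
  "z \<in> Sset n (Suc j) k l \<longleftrightarrow> z \<in> Xset n \<times> Xset n \<and>
      (\<forall>m m'. z \<in> Sset n j m m' \<longrightarrow> (fst z (Suc j) k m \<longleftrightarrow> snd z (Suc j) l m'))"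
proof -
  show "z \<in> Sset n 0 k l \<longleftrightarrow> z \<in> Xset n \<times> Xset n \<and> fst z 0 k = snd z 0 l"
    by (auto simp: Dset_def fun_eq_iff Sset.simps)
  have "z \<in> Sset n (Suc j) k l \<longleftrightarrow> (\<forall>i. z \<in> (case prod_decode i of (m, m') \<Rightarrow>
      (Xset n \<times> Xset n - Sset n j m m') \<union> Dset n (Suc j) k m l m'))" by (simp add: Sset.simps)
  also have "\<dots> \<longleftrightarrow> (\<forall>m m'. z \<in> (Xset n \<times> Xset n - Sset n j m m') \<union> Dset n (Suc j) k m l m')"
    using all_prod_decode[where P="\<lambda>p. z \<in> (case p of (m, m') \<Rightarrow>
      (Xset n \<times> Xset n - Sset n j m m') \<union> Dset n (Suc j) k m l m')"] by simp
  also have "\<dots> \<longleftrightarrow> z \<in> Xset n \<times> Xset n \<and>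
      (\<forall>m m'. z \<in> Sset n j m m' \<longrightarrow> (fst z (Suc j) k m \<longleftrightarrow> snd z (Suc j) l m'))"
    by (auto simp: Dset_def)
  finally show "z \<in> Sset n (Suc j) k l \<longleftrightarrow> z \<in> Xset n \<times> Xset n \<and>
      (\<forall>m m'. z \<in> Sset n j m m' \<longrightarrow> (fst z (Suc j) k m \<longleftrightarrow> snd z (Suc j) l m'))" .
qed


lemma Sset_sub: "Sset n j k l \<subseteq> Xset n \<times> Xset n"
  by (cases j) (auto simp: Sset_mem)

lemma Inter_clopen_Pi:
  fixes C :: "nat \<Rightarrow> 'a set"
  assumes "\<And>i. openin T (C i) \<and> closedin T (C i)" "1 \<le> q"
  shows "\<Inter>(range C) \<in> borel_Pi T q"
proof (cases "q = 1")
  case True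
  have cl: "closedin T (\<Inter>(range C))" by (rule closedin_Inter) (use assms in auto)
  then have "openin T (topspace T - \<Inter>(range C))" by (simp add: closedin_def)
  moreover have "\<Inter>(range C) = topspace T - (topspace T - \<Inter>(range C))"
    using closedin_subset[OF cl] by blast
  ultimately show ?thesis unfolding borel_Pi_def True by auto
next
  case False
  then obtain q' where q': "q = Suc q'" "1 \<le> q'" using assms(2) by (cases q) auto
  show ?thesis unfolding q'(1)
    by (rule Inter_Sigma) (use clopen_SP assms(1) q'(2) in auto)
qed

lemma S_Pi:
  assumes "j < n" "Suc j \<le> q"
  shows "Sset n j k l \<in> borel_Pi (TT n) q"
  using assms
proof (induction j arbitrary: k l q)
  case 0
  show ?case unfolding Sset.simps
    by (rule Inter_clopen_Pi) (use Dset_clopen 0 in auto)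
next
  case (Suc j)
  obtain q' where q': "q = Suc q'" "Suc j \<le> q'" using Suc.prems by (cases q) auto
  have IH: "Sset n j m m' \<in> borel_Pi (TT n) q'" for m m' using Suc.IH Suc.prems q' by simp
  have "(case prod_decode i of (m, m') \<Rightarrow>
      (Xset n \<times> Xset n - Sset n j m m') \<union> Dset n (Suc j) k m l m') \<in> borel_Sigma (TT n) q'" for i
  proof (cases "prod_decode i")
    case (Pair m m')
    have cm: "Xset n \<times> Xset n - Sset n j m m' \<in> borel_Sigma (TT n) q'"
      using Pi_compl[OF IH[of m m']] by (simp add: ts_X)
    have c: "openin (TT n) (Dset n (Suc j) k m l m')" "closedin (TT n) (Dset n (Suc j) k m l m')"
      using Dset_clopen[OF Suc.prems(1)] by auto
    have q1: "1 \<le> q'" using q' by simp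
    have "Xset n \<times> Xset n - Sset n j m m' \<union> Dset n (Suc j) k m l m' \<in> borel_Sigma (TT n) q'"
      by (rule Sigma_Un_clopen[OF cm c q1])
    then show ?thesis using Pair by simp
  qed
  then show ?case unfolding Sset.simps q'(1) by (rule Inter_Sigma) (use q' in simp)
qed

definition Cset :: "nat \<Rightarrow> nat \<Rightarrow> (pt \<times> pt) set" where
  "Cset n j = \<Inter>(range (\<lambda>k. \<Union>(range (\<lambda>l. Sset n j k l)))) \<inter> \<Inter>(range (\<lambda>l. \<Union>(range (\<lambda>k. Sset n j k l))))"

lemma C_Pi:
  assumes "j < n" "Suc j \<le> q"
  shows "Cset n j \<in> borel_Pi (TT n) (Suc (Suc q))"
proof -
  have a: "\<Union>(range (\<lambda>l. Sset n j k l)) \<in> borel_Sigma (TT n) (Suc q)" for k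
    by (rule Union_Pi) (use S_Pi assms in auto)
  have b: "\<Union>(range (\<lambda>k. Sset n j k l)) \<in> borel_Sigma (TT n) (Suc q)" for l
    by (rule Union_Pi) (use S_Pi assms in auto)
  show ?thesis unfolding Cset_def
    by (rule Pi_Int) (auto intro!: Inter_Sigma a b)
qed

lemma Cset_mem: "z \<in> Cset n j \<longleftrightarrow> z \<in> Xset n \<times> Xset n \<and>
   (\<forall>k. \<exists>l. z \<in> Sset n j k l) \<and> (\<forall>l. \<exists>k. z \<in> Sset n j k l)"
proof
  assume "z \<in> Cset n j"
  then have a: "\<forall>k. \<exists>l. z \<in> Sset n j k l" and b: "\<forall>l. \<exists>k. z \<in> Sset n j k l"
    unfolding Cset_def by auto
  from a obtain l where "z \<in> Sset n j 0 l" by blast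
  then have "z \<in> Xset n \<times> Xset n" using Sset_sub by blast
  then show "z \<in> Xset n \<times> Xset n \<and> (\<forall>k. \<exists>l. z \<in> Sset n j k l) \<and> (\<forall>l. \<exists>k. z \<in> Sset n j k l)"
    using a b by blast
qed (auto simp: Cset_def)

lemma K4:
  assumes "x \<in> Xset n" "y \<in> Xset n" "j < n" "\<forall>j'<j. range (aa x j') = range (aa y j')"
  shows "(x, y) \<in> Sset n j k l \<longleftrightarrow> aa x j k = aa y j l"
  using assms(3,4)
proof (induction j arbitrary: k l)
  case 0 then show ?case by (simp add: Sset_mem aa_0 assms)
next
  case (Suc j)
  have IH: "(x, y) \<in> Sset n j m m' \<longleftrightarrow> aa x j m = aa y j m'" for m m'
    using Suc.IH Suc.prems by simp
  have E: "range (aa x j) = range (aa y j)" using Suc.prems by simp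
  have "(x, y) \<in> Sset n (Suc j) k l \<longleftrightarrow>
      (\<forall>m m'. aa x j m = aa y j m' \<longrightarrow> (x (Suc j) k m \<longleftrightarrow> y (Suc j) l m'))"
    using IH assms(1,2) by (simp add: Sset_mem)
  also have "\<dots> \<longleftrightarrow> aa x j ` {m. x (Suc j) k m} = aa y j ` {m. y (Suc j) l m}"
  proof
    assume h: "\<forall>m m'. aa x j m = aa y j m' \<longrightarrow> (x (Suc j) k m \<longleftrightarrow> y (Suc j) l m')"
    show "aa x j ` {m. x (Suc j) k m} = aa y j ` {m. y (Suc j) l m}"
    proof
      show "aa x j ` {m. x (Suc j) k m} \<subseteq> aa y j ` {m. y (Suc j) l m}"
      proof
        fix w assume "w \<in> aa x j ` {m. x (Suc j) k m}"
        then obtain m where m: "w = aa x j m" "x (Suc j) k m" by auto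
        obtain m' where "aa x j m = aa y j m'" using E by (metis rangeI image_iff)
        then show "w \<in> aa y j ` {m. y (Suc j) l m}" using h m by auto
      qed
      show "aa y j ` {m. y (Suc j) l m} \<subseteq> aa x j ` {m. x (Suc j) k m}"
      proof
        fix w assume "w \<in> aa y j ` {m. y (Suc j) l m}"
        then obtain m' where m': "w = aa y j m'" "y (Suc j) l m'" by auto
        obtain m where "aa x j m = aa y j m'" using E by (metis rangeI image_iff)
        then show "w \<in> aa x j ` {m. x (Suc j) k m}" using h m' by (metis image_eqI mem_Collect_eq)
      qed
    qed
  next
    assume h: "aa x j ` {m. x (Suc j) k m} = aa y j ` {m. y (Suc j) l m}"
    show "\<forall>m m'. aa x j m = aa y j m' \<longrightarrow> (x (Suc j) k m \<longleftrightarrow> y (Suc j) l m')"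
    proof (intro allI impI)
      fix m m' assume e: "aa x j m = aa y j m'"
      have "x (Suc j) k m \<longleftrightarrow> aa x j m \<in> aa x j ` {m. x (Suc j) k m}"
        using K2[OF assms(1) Suc.prems(1)] by simp
      also have "\<dots> \<longleftrightarrow> aa y j m' \<in> aa y j ` {m. y (Suc j) l m}" using h e by simp
      also have "\<dots> \<longleftrightarrow> y (Suc j) l m'" using K2[OF assms(2) Suc.prems(1)] by simp
      finally show "x (Suc j) k m \<longleftrightarrow> y (Suc j) l m'" .
    qed
  qed
  also have "\<dots> \<longleftrightarrow> aa x (Suc j) k = aa y (Suc j) l" by (simp add: aa_Suc_eq)
  finally show ?case .
qed


lemma range_eq_iff2: "range f = range g \<longleftrightarrow> (\<forall>k. \<exists>l. f k = g l) \<and> (\<forall>l. \<exists>k. f k = g l)"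
proof
  assume h: "range f = range g"
  have "\<exists>l. f k = g l" for k
  proof -
    have "f k \<in> range g" using h by (metis rangeI)
    then show ?thesis by auto
  qed
  moreover have "\<exists>k. f k = g l" for l
  proof -
    have "g l \<in> range f" using h by (metis rangeI)
    then show ?thesis by (auto simp: eq_commute)
  qed
  ultimately show "(\<forall>k. \<exists>l. f k = g l) \<and> (\<forall>l. \<exists>k. f k = g l)" by blast
next
  assume h: "(\<forall>k. \<exists>l. f k = g l) \<and> (\<forall>l. \<exists>k. f k = g l)"
  show "range f = range g"
  proof
    show "range f \<subseteq> range g" using h by (auto simp: image_def)
    show "range g \<subseteq> range f" using h by (auto simp: image_def) (metis)
  qed
qed

lemma C_iff:
  assumes "x \<in> Xset n" "y \<in> Xset n" "j < n" "\<forall>j'<j. range (aa x j') = range (aa y j')"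
  shows "(x, y) \<in> Cset n j \<longleftrightarrow> range (aa x j) = range (aa y j)"
  unfolding range_eq_iff2 Cset_mem using K4[OF assms] assms(1,2) by simp

lemma G_Pi:
  assumes "M < n"
  shows "{z \<in> Xset n \<times> Xset n. \<forall>j\<le>M. z \<in> Cset n j} \<in> borel_Pi (TT n) (Suc (Suc n))"
  using assms
proof (induction M)
  case 0
  have "{z \<in> Xset n \<times> Xset n. \<forall>j\<le>0. z \<in> Cset n j} = Cset n 0"
    using Cset_mem by auto
  then show ?case using C_Pi[of 0 n n] 0 by simp
next
  case (Suc M)
  have "{z \<in> Xset n \<times> Xset n. \<forall>j\<le>Suc M. z \<in> Cset n j} =
        {z \<in> Xset n \<times> Xset n. \<forall>j\<le>M. z \<in> Cset n j} \<inter> Cset n (Suc M)"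
    using Cset_mem by (auto simp: le_Suc_eq)
  moreover have "Cset n (Suc M) \<in> borel_Pi (TT n) (Suc (Suc n))"
    using C_Pi[of "Suc M" n n] Suc.prems by simp
  ultimately show ?case using Pi_Int[of _ "TT n" "Suc n"] Suc by simp
qed

theorem proposition1p16:
  fixes n :: nat
  assumes "1 \<le> n"
  shows "F_rel n \<in> borel_Pi (prod_topology (Xtop n) (Xtop n)) (2 + n)"
proof -
  obtain N where N: "n = Suc N" using assms by (cases n) auto
  have eq: "F_rel n = {z \<in> Xset n \<times> Xset n. \<forall>j\<le>N. z \<in> Cset n j}"
  proof (rule set_eqI)
    fix z :: "pt \<times> pt"
    obtain x y where z: "z = (x, y)" by fastforce
    show "z \<in> F_rel n \<longleftrightarrow> z \<in> {z \<in> Xset n \<times> Xset n. \<forall>j\<le>N. z \<in> Cset n j}"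
    proof (cases "x \<in> Xset n \<and> y \<in> Xset n")
      case False then show ?thesis by (auto simp: z F_rel_def)
    next
      case True
      then have x: "x \<in> Xset n" and y: "y \<in> Xset n" by auto
      have "z \<in> F_rel n \<longleftrightarrow> range (aa x N) = range (aa y N)"
        using True by (simp add: z F_rel_def N bigA)
      also have "\<dots> \<longleftrightarrow> (\<forall>j\<le>N. (x, y) \<in> Cset n j)"
      proof
        assume E: "range (aa x N) = range (aa y N)"
        have all: "range (aa x j) = range (aa y j)" if "j \<le> N" for j
          using K3d[OF x y, of j "N - j"] E that N by simp
        show "\<forall>j\<le>N. (x, y) \<in> Cset n j"
          using C_iff[OF x y] all N by auto
      next
        assume C: "\<forall>j\<le>N. (x, y) \<in> Cset n j"
        have "j \<le> N \<Longrightarrow> range (aa x j) = range (aa y j)" for j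
        proof (induction j rule: less_induct)
          case (less j)
          then show ?case using C_iff[OF x y, of j] C N by auto
        qed
        then show "range (aa x N) = range (aa y N)" by simp
      qed
      finally show ?thesis using True z by simp
    qed
  qed
  show ?thesis unfolding eq using G_Pi[of N n] N by simp
qed


end
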